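(* Let $V$ be countably infinite, $\psi:K_V\to\mathbb N$ a fixed bijection, $G_0\in\mathscr{G}_0(V)\cup\mathscr{G}_1(V)$, $\varphi\in\ell^1_+(K_V)$, and $f(G):=d_\varphi(G_0,G)$. The following are equivalent: (1) the limit $c_\varphi := \lim_{n\to\infty}2^n\varphi(\psi^{-1}(n))$ exists; (2) $f'(G)$ exists for some $G\in\mathscr{G}(V)\setminus\{\emptyset,K_V\}$ with $G\Delta G_0\in\mathscr{G}_0(V)\cup\mathscr{G}_1(V)$. In this case $f'(G)$ exists for every $G\in\mathscr{G}(V)\setminus\{\emptyset,K_V\}$ with $G\Delta G_0\in\mathscr{G}_0(V)\cup\mathscr{G}_1(V)$, and $f'(G) = c_\varphi$ if $G, G\Delta G_0$ both lie in $\mathscr{G}_0(V)$ or both lie in $\mathscr{G}_1(V)$, while $f'(G) = -c_\varphi$ if $(G, G\Delta G_0)\in\mathscr{G}_i(V)\times\mathscr{G}_{1-i}(V)$ for some $i\in\{0,1\}$.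
   Context: $K_V$ is the set of $2$-element subsets of $V$; $\mathscr{G}(V)$ is the set of simple graphs on $V$ identified with their edge sets, with the product topology of $\{0,1\}^{K_V}$; $\mathscr{G}_0(V)$, $\mathscr{G}_1(V)$ are the graphs with finitely, resp. co-finitely, many edges; $\mathscr{G}'(V):=\mathscr{G}(V)\setminus(\mathscr{G}_0(V)\cup\mathscr{G}_1(V))$. $\ell^1_+(K_V)$ is the set of $\varphi:K_V\to(0,\infty)$ with $\sum_e\varphi(e)<\infty$, and $d_\varphi(G_1,G_2):=\sum_{e\in G_1\Delta G_2}\varphi(e)$. $\mathbb N=\{1,2,\dots\}$, $\|G\|_{\psi,2}:=\sum_{e\in G}2^{-\psi(e)}$. For $f:\mathscr{G}(V)\to\mathbb R$ and $G\ne\emptyset,K_V$, $f'(G) := \lim_{G_1\to G,\ G_1\in\mathscr{G}'(V)\setminus\{G\}} \frac{f(G_1)-f(G)}{\|G_1\|_{\psi,2}-\|G\|_{\psi,2}}$ (limit in the product topology) if it exists. *)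

theory Defs
  imports "HOL-Analysis.Analysis"
begin

definition KV :: "'v set set" where
  "KV = {e. card e = 2}"

text \<open>Simple graphs on V, identified with their edge sets.\<close>
definition graphs :: "'v set set set" where
  "graphs = Pow KV"

definition graphs0 :: "'v set set set" where
  "graphs0 = {G. G \<subseteq> KV \<and> finite G}"

definition graphs1 :: "'v set set set" where
  "graphs1 = {G. G \<subseteq> KV \<and> finite (KV - G)}"

definition graphs' :: "'v set set set" where
  "graphs' = graphs - (graphs0 \<union> graphs1)"

definition symdiff :: "'a set \<Rightarrow> 'a set \<Rightarrow> 'a set" where
  "symdiff A B = (A - B) \<union> (B - A)"

definition l1_pos :: "('v set \<Rightarrow> real) \<Rightarrow> bool" where
  "l1_pos \<phi> \<longleftrightarrow> (\<forall>e\<in>KV. \<phi> e > 0) \<and> \<phi> summable_on KV"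

definition d_phi :: "('v set \<Rightarrow> real) \<Rightarrow> 'v set set \<Rightarrow> 'v set set \<Rightarrow> real" where
  "d_phi \<phi> G1 G2 = (\<Sum>\<^sub>\<infinity>e\<in>symdiff G1 G2. \<phi> e)"

definition norm_psi2 :: "('v set \<Rightarrow> nat) \<Rightarrow> 'v set set \<Rightarrow> real" where
  "norm_psi2 \<psi> G = (\<Sum>\<^sub>\<infinity>e\<in>G. (1/2::real) ^ \<psi> e)"

text \<open>Neighbourhood filter of a graph G in the product topology of \<open>{0,1}^{K_V}\<close>:
  basic neighbourhoods are the graphs agreeing with G on a finite set of pairs.\<close>
definition graph_nhds :: "'v set set \<Rightarrow> 'v set set filter" where
  "graph_nhds G = (INF F\<in>{F. finite F \<and> F \<subseteq> KV}.
      principal {H\<in>graphs. H \<inter> F = G \<inter> F})"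

definition has_graph_deriv ::
  "('v set \<Rightarrow> nat) \<Rightarrow> ('v set set \<Rightarrow> real) \<Rightarrow> 'v set set \<Rightarrow> real \<Rightarrow> bool" where
  "has_graph_deriv \<psi> f G L \<longleftrightarrow>
     ((\<lambda>G1. (f G1 - f G) / (norm_psi2 \<psi> G1 - norm_psi2 \<psi> G)) \<longlongrightarrow> L)
       (inf (graph_nhds G) (principal (graphs' - {G})))"

end

theory Submission
  imports Defs
begin

lemma symdiff_commute: "symdiff A B = symdiff B A"
  unfolding symdiff_def by blast

lemma symdiff_assoc': "symdiff G0 (symdiff G D) = symdiff (symdiff G0 G) D"
  unfolding symdiff_def by blast

lemma symdiff_cancel: "symdiff (symdiff G D) G = D"
  unfolding symdiff_def by blast

lemma symdiff_back: "symdiff G (symdiff H G) = H"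
  unfolding symdiff_def by blast

lemma graph_nhds_eventually:
  assumes "finite F" "F \<subseteq> KV" "\<And>H. H \<in> graphs \<Longrightarrow> H \<inter> F = G \<inter> F \<Longrightarrow> P H"
  shows "eventually P (graph_nhds G)"
  unfolding graph_nhds_def
  by (rule eventually_INF1[of F]) (use assms in \<open>auto simp: eventually_principal\<close>)

lemma graph_nhds_eventuallyD:
  assumes "eventually P (graph_nhds G)"
  obtains F where "finite F" "F \<subseteq> KV" "\<And>H. H \<in> graphs \<Longrightarrow> H \<inter> F = G \<inter> F \<Longrightarrow> P H"
proof -
  have "\<exists>F\<in>{F. finite F \<and> F \<subseteq> KV}. eventually P (principal {H\<in>graphs. H \<inter> F = G \<inter> F})"
  proof (rule iffD1[OF eventually_INF_base])
    show "{F. finite F \<and> F \<subseteq> KV} \<noteq> {}" by blast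
  next
    fix a b :: "'a set set" assume "a \<in> {F. finite F \<and> F \<subseteq> KV}" "b \<in> {F. finite F \<and> F \<subseteq> KV}"
    then show "\<exists>x\<in>{F. finite F \<and> F \<subseteq> KV}.
      principal {H\<in>graphs. H \<inter> x = G \<inter> x} \<le> inf (principal {H\<in>graphs. H \<inter> a = G \<inter> a}) (principal {H\<in>graphs. H \<inter> b = G \<inter> b})"
      by (intro bexI[of _ "a \<union> b"]) auto
  next
    show "eventually P (INF F\<in>{F. finite F \<and> F \<subseteq> KV}. principal {H\<in>graphs. H \<inter> F = G \<inter> F})"
      using assms unfolding graph_nhds_def .
  qed
  then show ?thesis using that by (auto simp: eventually_principal)
qed

definition sg :: "'a set \<Rightarrow> real" where "sg A = (if finite A then 1 else -1)"
definition ex :: "'v set set \<Rightarrow> 'v set set" where "ex A = (if finite A then A else KV - A)"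

lemma ex_finite: "A \<in> graphs0 \<union> graphs1 \<Longrightarrow> finite (ex A)"
  unfolding ex_def graphs0_def graphs1_def by auto

lemma ex_sub: "ex A \<subseteq> KV \<or> \<not> finite A \<Longrightarrow> A \<subseteq> KV \<Longrightarrow> ex A \<subseteq> KV"
  unfolding ex_def by auto

lemma g01_sub: "A \<in> graphs0 \<union> graphs1 \<Longrightarrow> A \<subseteq> KV"
  unfolding graphs0_def graphs1_def by auto

lemma infsum_split_add:
  fixes g :: "'a \<Rightarrow> real"
  assumes "g summable_on K" "X \<subseteq> K" "D \<subseteq> K" "X \<inter> D = {}"
  shows "infsum g (X \<union> D) = infsum g X + infsum g D"
  by (rule infsum_Un_disjoint) (use assms in \<open>auto intro: summable_on_subset[OF assms(1)]\<close>)

lemma infsum_split_diff: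
  fixes g :: "'a \<Rightarrow> real"
  assumes "g summable_on K" "X \<subseteq> K" "D \<subseteq> X"
  shows "infsum g (X - D) = infsum g X - infsum g D"
proof -
  have "infsum g ((X - D) \<union> D) = infsum g (X - D) + infsum g D"
    by (rule infsum_Un_disjoint) (use assms in \<open>auto intro: summable_on_subset[OF assms(1)]\<close>)
  moreover have "(X - D) \<union> D = X" using assms by auto
  ultimately show ?thesis by simp
qed

lemma diff_formula:
  fixes g :: "'v set \<Rightarrow> real"
  assumes "g summable_on KV" "X \<in> graphs0 \<union> graphs1" "D \<subseteq> KV" "D \<inter> ex X = {}"
  shows "infsum g (symdiff X D) - infsum g X = sg X * infsum g D"
proof (cases "finite X")
  case True
  then have "symdiff X D = X \<union> D" "X \<inter> D = {}" using assms unfolding symdiff_def ex_def by auto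
  then show ?thesis using infsum_split_add[OF assms(1) g01_sub[OF assms(2)] assms(3)] True
    by (simp add: sg_def)
next
  case False
  then have "D \<subseteq> X" using assms unfolding ex_def by auto
  then have "symdiff X D = X - D" unfolding symdiff_def by auto
  then show ?thesis using infsum_split_diff[OF assms(1) g01_sub[OF assms(2)] \<open>D \<subseteq> X\<close>] False
    by (simp add: sg_def)
qed

lemma admissible:
  assumes G: "G \<in> graphs0 \<union> graphs1" and "D \<subseteq> KV" "Os \<subseteq> KV" "D \<inter> ex G = {}" "Os \<inter> ex G = {}"
    "D \<inter> Os = {}" "infinite D" "infinite Os"
  shows "symdiff G D \<in> graphs'"
proof -
  have sub: "symdiff G D \<subseteq> KV" using g01_sub[OF G] assms unfolding symdiff_def by auto
  have "(D \<subseteq> symdiff G D \<and> Os \<subseteq> KV - symdiff G D) \<or> (Os \<subseteq> symdiff G D \<and> D \<subseteq> KV - symdiff G D)"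
    using assms g01_sub[OF G] unfolding ex_def symdiff_def by (cases "finite G") auto
  then have "infinite (symdiff G D)" "infinite (KV - symdiff G D)"
    using assms(7,8) finite_subset by metis+
  then show ?thesis using sub unfolding graphs'_def graphs_def graphs0_def graphs1_def by auto
qed

lemma symdiff_closed:
  assumes X: "X \<in> graphs0 \<union> graphs1" and Y: "Y \<in> graphs0 \<union> graphs1"
  shows "symdiff X Y \<in> graphs0 \<union> graphs1"
proof -
  have XK: "X \<subseteq> KV" and YK: "Y \<subseteq> KV" using X Y g01_sub by auto
  have sub: "symdiff X Y \<subseteq> KV" using XK YK unfolding symdiff_def by auto
  consider "finite X" "finite Y" | "finite X" "finite (KV - Y)" | "finite (KV - X)" "finite Y"
    | "finite (KV - X)" "finite (KV - Y)"
    using X Y unfolding graphs0_def graphs1_def by auto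
  then show ?thesis
  proof cases
    case 1
    have "symdiff X Y \<subseteq> X \<union> Y" unfolding symdiff_def by auto
    then have "finite (symdiff X Y)" using finite_subset[OF _ finite_UnI[OF 1]] by blast
    then show ?thesis using sub unfolding graphs0_def by auto
  next
    case 2
    have "KV - symdiff X Y \<subseteq> X \<union> (KV - Y)" unfolding symdiff_def by auto
    then have "finite (KV - symdiff X Y)" using 2 finite_subset by blast
    then show ?thesis using sub unfolding graphs1_def by auto
  next
    case 3
    have "KV - symdiff X Y \<subseteq> (KV - X) \<union> Y" unfolding symdiff_def by auto
    then have "finite (KV - symdiff X Y)" using 3 finite_subset by blast
    then show ?thesis using sub unfolding graphs1_def by auto
  next
    case 4
    have "symdiff X Y \<subseteq> (KV - X) \<union> (KV - Y)" using XK YK unfolding symdiff_def by auto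
    then have "finite (symdiff X Y)" using 4 finite_subset by blast
    then show ?thesis using sub unfolding graphs0_def by auto
  qed
qed

lemma real_key:
  fixes P1 W1 a u L t :: real
  assumes "\<bar>P1/W1 - L\<bar> < t" "\<bar>(a+P1)/(u+W1) - L\<bar> < t" "0<W1" "W1 \<le> u" "0 < u"
  shows "\<bar>a/u - L\<bar> < 3*t"
proof -
  have 1: "\<bar>P1 - L*W1\<bar> < t*W1"
  proof -
    have "P1 - L*W1 = (P1/W1 - L) * W1" using assms(3) by (simp add: field_simps)
    then show ?thesis using assms(1,3) by (simp add: abs_mult)
  qed
  have 2: "\<bar>(a+P1) - L*(u+W1)\<bar> < t*(u+W1)"
  proof -
    have "(a+P1) - L*(u+W1) = ((a+P1)/(u+W1) - L) * (u+W1)" using assms(3,5) by (simp add: field_simps)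
    then show ?thesis using assms(2,3,5) by (simp add: abs_mult)
  qed
  have tpos: "t > 0" using 1 assms(3) by (smt (verit) abs_ge_zero mult_nonpos_nonneg)
  have tw: "t * W1 \<le> t * u" using tpos assms(4) by simp
  have eq: "a - L*u = ((a+P1) - L*(u+W1)) - (P1 - L*W1)" by (simp add: algebra_simps)
  have "\<bar>a - L*u\<bar> \<le> \<bar>(a+P1) - L*(u+W1)\<bar> + \<bar>P1 - L*W1\<bar>" unfolding eq by (rule abs_triangle_ineq4)
  then have "\<bar>a - L*u\<bar> < 3*t*u" using 1 2 tw by (simp add: algebra_simps)
  moreover have "a/u - L = (a - L*u)/u" using assms(5) by (simp add: field_simps)
  ultimately show ?thesis using assms(5) by (simp add: abs_divide divide_less_eq)
qed

lemma geom_tail: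
  shows "((\<lambda>m. (1/2::real)^m) summable_on {n<..}) \<and> infsum (\<lambda>m. (1/2::real)^m) {n<..} = (1/2)^n"
proof -
  have bb: "bij_betw (\<lambda>j. j + n) {1..} {n<..}"
    by (rule bij_betwI[where g="\<lambda>m. m - n"]) auto
  have hs: "((\<lambda>j. (1/2::real)^j) has_sum 1) {1..}"
    using has_sum_geometric_from_1[of "1/2::real"] by simp
  have hs2: "((\<lambda>j. (1/2::real)^j * (1/2)^n) has_sum (1 * (1/2)^n)) {1..}"
    by (rule has_sum_cmult_left[OF hs])
  have hs3: "((\<lambda>j. (1/2::real)^(j+n)) has_sum (1/2)^n) {1..}"
    using hs2 by (simp add: power_add)
  have "((\<lambda>m. (1/2::real)^m) has_sum (1/2)^n) {n<..}"
    using hs3 has_sum_reindex_bij_betw[OF bb, where f="\<lambda>m. (1/2::real)^m"] by simp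
  then show ?thesis using infsumI summable_on_def by blast
qed

lemma sgn_swap: "s = 1 \<or> s = -1 \<Longrightarrow> \<bar>R - s*L\<bar> = \<bar>s*R - (L::real)\<bar>"
  by (auto simp: abs_minus_commute)

lemma sg_cases: "sg A = 1 \<or> sg A = -1" unfolding sg_def by auto


context
  fixes \<psi> :: "'v set \<Rightarrow> nat" and \<phi> :: "'v set \<Rightarrow> real"
  assumes bij: "bij_betw \<psi> KV {1..}" and l1: "l1_pos \<phi>"
begin

lemma inj: "inj_on \<psi> KV" using bij by (rule bij_betw_imp_inj_on)
lemma img: "\<psi> ` KV = {1..}" using bij by (rule bij_betw_imp_surj_on)

lemma KV_infinite: "infinite (KV :: 'v set set)"
  using bij_betw_finite[OF bij] infinite_Ici[where a="1::nat"] by blast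

lemma inv_in: "n \<ge> 1 \<Longrightarrow> the_inv_into KV \<psi> n \<in> KV"
  using the_inv_into_into[OF inj, of n KV] img by auto

lemma psi_inv: "n \<ge> 1 \<Longrightarrow> \<psi> (the_inv_into KV \<psi> n) = n"
  using f_the_inv_into_f[OF inj, of n] img by auto

lemma inv_psi: "e \<in> KV \<Longrightarrow> the_inv_into KV \<psi> (\<psi> e) = e"
  using the_inv_into_f_f[OF inj] by auto

lemma psi_ge1: "e \<in> KV \<Longrightarrow> \<psi> e \<ge> 1"
  using img by auto

lemma phi_summable: "\<phi> summable_on KV" using l1 unfolding l1_pos_def by auto
lemma phi_pos: "e \<in> KV \<Longrightarrow> \<phi> e > 0" using l1 unfolding l1_pos_def by auto

lemma w_summable: "(\<lambda>e. (1/2::real) ^ \<psi> e) summable_on KV"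
proof -
  have "(\<lambda>m. (1/2::real)^m) summable_on {1..}"
    using has_sum_geometric_from_1[of "1/2::real"] summable_on_def by auto
  then show ?thesis
    using summable_on_reindex_bij_betw[OF bij, where f="\<lambda>m. (1/2::real)^m"] by simp
qed

lemma sub_summable:
  fixes g :: "'v set \<Rightarrow> real"
  shows "g summable_on KV \<Longrightarrow> D \<subseteq> KV \<Longrightarrow> g summable_on D"
  by (rule summable_on_subset)

lemma w_pos_sum:
  assumes "D \<subseteq> KV" "D \<noteq> {}"
  shows "infsum (\<lambda>e. (1/2::real) ^ \<psi> e) D > 0"
proof -
  obtain e where e: "e \<in> D" using assms by auto
  have "infsum (\<lambda>e. (1/2::real) ^ \<psi> e) {e} \<le> infsum (\<lambda>e. (1/2::real) ^ \<psi> e) D"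
    by (rule infsum_mono_neutral) (use e sub_summable[OF w_summable assms(1)] in auto)
  moreover have "infsum (\<lambda>e. (1/2::real) ^ \<psi> e) {e} > 0" by simp
  ultimately show ?thesis by linarith
qed

lemma ratio_bound:
  assumes "D \<subseteq> KV" "D \<noteq> {}" "\<And>e. e \<in> D \<Longrightarrow> \<bar>2 ^ \<psi> e * \<phi> e - c\<bar> \<le> r"
  shows "\<bar>infsum \<phi> D / infsum (\<lambda>e. (1/2::real) ^ \<psi> e) D - c\<bar> \<le> r"
proof -
  define W where "W = infsum (\<lambda>e. (1/2::real) ^ \<psi> e) D"
  define P where "P = infsum \<phi> D"
  have W: "W > 0" using w_pos_sum[OF assms(1,2)] W_def by simp
  have hw: "((\<lambda>e. (1/2::real) ^ \<psi> e) has_sum W) D"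
    using sub_summable[OF w_summable assms(1)] W_def by simp
  have hp: "(\<phi> has_sum P) D"
    using sub_summable[OF phi_summable assms(1)] P_def by simp
  have h1: "((\<lambda>e. \<phi> e + (-c) * (1/2::real) ^ \<psi> e) has_sum (P + (-c) * W)) D"
    by (rule has_sum_add[OF hp has_sum_cmult_right[OF hw]])
  have h2: "((\<lambda>e. r * (1/2::real) ^ \<psi> e) has_sum (r * W)) D"
    by (rule has_sum_cmult_right[OF hw])
  have "norm (P + (-c) * W) \<le> r * W"
  proof (rule norm_infsum_le[OF h1 h2])
    fix e assume e: "e \<in> D"
    have "\<phi> e + (-c) * (1/2::real) ^ \<psi> e = (1/2::real) ^ \<psi> e * (2 ^ \<psi> e * \<phi> e - c)"
      by (simp add: algebra_simps power_one_over)
    then have "norm (\<phi> e + (-c) * (1/2::real) ^ \<psi> e) = (1/2::real) ^ \<psi> e * \<bar>2 ^ \<psi> e * \<phi> e - c\<bar>"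
      by (simp add: abs_mult)
    also have "\<dots> \<le> (1/2::real) ^ \<psi> e * r"
      by (rule mult_left_mono) (use assms(3)[OF e] in auto)
    finally show "norm (\<phi> e + (-c) * (1/2::real) ^ \<psi> e) \<le> r * (1/2::real) ^ \<psi> e"
      by (simp add: mult.commute)
  qed
  then have "\<bar>P - c * W\<bar> \<le> r * W" by simp
  then have "\<bar>P / W - c\<bar> \<le> r" using W
    by (simp add: divide_diff_eq_iff divide_le_eq)
  then show ?thesis unfolding P_def W_def .
qed


lemma sg0: "A \<in> graphs0 \<Longrightarrow> sg A = 1" unfolding sg_def graphs0_def by auto

lemma sg1:
  fixes A :: "'v set set"
  assumes "A \<in> graphs1" shows "sg A = -1"
proof -
  have eq: "KV = A \<union> (KV - A)" using assms unfolding graphs1_def by auto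
  have "infinite A"
  proof
    assume "finite A"
    then have "finite (A \<union> (KV - A))" using assms unfolding graphs1_def by auto
    then show False using KV_infinite eq by metis
  qed
  then show ?thesis unfolding sg_def by auto
qed

lemma quot:
  assumes G: "G \<in> graphs0 \<union> graphs1" and A: "symdiff G0 G \<in> graphs0 \<union> graphs1"
    and D: "D \<subseteq> KV" "D \<inter> (ex G \<union> ex (symdiff G0 G)) = {}"
  shows "(d_phi \<phi> G0 (symdiff G D) - d_phi \<phi> G0 G) / (norm_psi2 \<psi> (symdiff G D) - norm_psi2 \<psi> G)
     = sg (symdiff G0 G) * sg G * (infsum \<phi> D / infsum (\<lambda>e. (1/2::real) ^ \<psi> e) D)"
proof -
  have 1: "d_phi \<phi> G0 (symdiff G D) - d_phi \<phi> G0 G = sg (symdiff G0 G) * infsum \<phi> D"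
    unfolding d_phi_def symdiff_assoc' by (rule diff_formula[OF phi_summable A D(1)]) (use D(2) in blast)
  have 2: "norm_psi2 \<psi> (symdiff G D) - norm_psi2 \<psi> G = sg G * infsum (\<lambda>e. (1/2::real) ^ \<psi> e) D"
    unfolding norm_psi2_def by (rule diff_formula[OF w_summable G D(1)]) (use D(2) in blast)
  show ?thesis unfolding 1 2 using sg_cases[of G] sg_cases[of "symdiff G0 G"] by (elim disjE) simp_all
qed

lemma forward:
  assumes lim: "(\<lambda>n. 2 ^ n * \<phi> (the_inv_into KV \<psi> n)) \<longlonglongrightarrow> c"
    and G: "G \<in> graphs0 \<union> graphs1" and A: "symdiff G0 G \<in> graphs0 \<union> graphs1"
  shows "has_graph_deriv \<psi> (\<lambda>H. d_phi \<phi> G0 H) G (sg (symdiff G0 G) * sg G * c)"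
  unfolding has_graph_deriv_def
proof (rule tendstoI)
  fix \<epsilon> :: real assume \<epsilon>: "\<epsilon> > 0"
  obtain N where N: "\<And>n. n \<ge> N \<Longrightarrow> \<bar>2 ^ n * \<phi> (the_inv_into KV \<psi> n) - c\<bar> < \<epsilon>/2"
    using LIMSEQ_D[OF lim, of "\<epsilon>/2"] \<epsilon> by auto
  define F where "F = {e\<in>KV. \<psi> e < N} \<union> ex G \<union> ex (symdiff G0 G)"
  have fin1: "finite {e\<in>KV. \<psi> e < N}"
  proof (rule finite_imageD)
    show "finite (\<psi> ` {e\<in>KV. \<psi> e < N})" by (rule finite_subset[of _ "{..<N}"]) auto
    show "inj_on \<psi> {e\<in>KV. \<psi> e < N}" using inj by (rule inj_on_subset) auto
  qed
  have finF: "finite F" unfolding F_def using fin1 ex_finite[OF G] ex_finite[OF A] by auto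
  have FKV: "F \<subseteq> KV" unfolding F_def ex_def using g01_sub[OF G] g01_sub[OF A] by auto
  define s where "s = sg (symdiff G0 G) * sg G"
  have s: "s = 1 \<or> s = -1" using sg_cases[of G] sg_cases[of "symdiff G0 G"] unfolding s_def by auto
  let ?q = "\<lambda>G1. (d_phi \<phi> G0 G1 - d_phi \<phi> G0 G) / (norm_psi2 \<psi> G1 - norm_psi2 \<psi> G)"
  show "eventually (\<lambda>G1. dist (?q G1) (sg (symdiff G0 G) * sg G * c) < \<epsilon>) (inf (graph_nhds G) (principal (graphs' - {G})))"
    unfolding eventually_inf_principal
  proof (rule graph_nhds_eventually[OF finF FKV], intro impI)
    fix H assume H: "H \<in> graphs" "H \<inter> F = G \<inter> F" "H \<in> graphs' - {G}"
    define D where "D = symdiff H G"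
    have HD: "H = symdiff G D" unfolding D_def by (simp add: symdiff_back)
    have DKV: "D \<subseteq> KV" using H(1) g01_sub[OF G] unfolding D_def symdiff_def graphs_def by auto
    have DF: "D \<inter> F = {}" using H(2) unfolding D_def symdiff_def by auto
    have Dne: "D \<noteq> {}" using H(3) unfolding D_def symdiff_def by auto
    have q: "?q H = s * (infsum \<phi> D / infsum (\<lambda>e. (1/2::real) ^ \<psi> e) D)"
      unfolding HD s_def by (rule quot[OF G A DKV]) (use DF in \<open>auto simp: F_def\<close>)
    have "\<bar>infsum \<phi> D / infsum (\<lambda>e. (1/2::real) ^ \<psi> e) D - c\<bar> \<le> \<epsilon>/2"
    proof (rule ratio_bound[OF DKV Dne])
      fix e assume e: "e \<in> D"
      then have "e \<in> KV" "\<psi> e \<ge> N" using DKV DF unfolding F_def by auto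
      then show "\<bar>2 ^ \<psi> e * \<phi> e - c\<bar> \<le> \<epsilon>/2" using N[of "\<psi> e"] inv_psi by force
    qed
    then show "dist (?q H) (sg (symdiff G0 G) * sg G * c) < \<epsilon>"
      unfolding q s_def[symmetric] dist_real_def using s \<epsilon> by (auto simp: abs_minus_commute)
  qed
qed


lemma inv_inj: "inj_on (the_inv_into KV \<psi>) {1..}"
  using bij_betw_the_inv_into[OF bij] by (rule bij_betw_imp_inj_on)

lemma converse:
  assumes G: "G \<in> graphs0 \<union> graphs1" and A: "symdiff G0 G \<in> graphs0 \<union> graphs1"
    and der: "has_graph_deriv \<psi> (\<lambda>H. d_phi \<phi> G0 H) G L"
  shows "(\<lambda>n. 2 ^ n * \<phi> (the_inv_into KV \<psi> n)) \<longlonglongrightarrow> sg (symdiff G0 G) * sg G * L"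
proof (rule LIMSEQ_I)
  fix \<epsilon> :: real assume \<epsilon>: "\<epsilon> > 0"
  define s where "s = sg (symdiff G0 G) * sg G"
  have s: "s = 1 \<or> s = -1" using sg_cases[of G] sg_cases[of "symdiff G0 G"] unfolding s_def by auto
  define w where "w = (\<lambda>e. (1/2::real) ^ \<psi> e)"
  define inv where "inv = the_inv_into KV \<psi>"
  let ?q = "\<lambda>G1. (d_phi \<phi> G0 G1 - d_phi \<phi> G0 G) / (norm_psi2 \<psi> G1 - norm_psi2 \<psi> G)"
  have ev: "eventually (\<lambda>H. H \<in> graphs' - {G} \<longrightarrow> dist (?q H) L < \<epsilon>/4) (graph_nhds G)"
    using tendstoD[OF der[unfolded has_graph_deriv_def], of "\<epsilon>/4"] \<epsilon>
    unfolding eventually_inf_principal by simp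
  obtain F where F: "finite F" "F \<subseteq> KV"
    "\<And>H. H \<in> graphs \<Longrightarrow> H \<inter> F = G \<inter> F \<Longrightarrow> H \<in> graphs' - {G} \<longrightarrow> dist (?q H) L < \<epsilon>/4"
    by (rule graph_nhds_eventuallyD[OF ev]) blast
  define F1 where "F1 = F \<union> ex G \<union> ex (symdiff G0 G)"
  have finF1: "finite F1" unfolding F1_def using F(1) ex_finite[OF G] ex_finite[OF A] by auto
  define N where "N = Suc (Max (\<psi> ` F1))"
  have NF1: "\<And>x. x \<in> F1 \<Longrightarrow> \<psi> x < N"
  proof -
    fix x assume "x \<in> F1"
    then have "\<psi> x \<le> Max (\<psi> ` F1)" using finF1 by (intro Max_ge) auto
    then show "\<psi> x < N" unfolding N_def by simp
  qed
  have key: "\<bar>infsum \<phi> D / infsum w D - s * L\<bar> < \<epsilon>/4"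
    if D: "D \<subseteq> KV" "D \<inter> F1 = {}" "infinite D" "Os \<subseteq> KV" "Os \<inter> F1 = {}" "D \<inter> Os = {}" "infinite Os"
    for D Os
  proof -
    define H where "H = symdiff G D"
    have H': "H \<in> graphs'" unfolding H_def
      by (rule admissible[OF G D(1) D(4) _ _ D(6) D(3) D(7)]) (use D(2,5) in \<open>auto simp: F1_def\<close>)
    have Hg: "H \<in> graphs" using H' unfolding graphs'_def by auto
    have HF: "H \<inter> F = G \<inter> F" using D(2) unfolding H_def F1_def symdiff_def by auto
    have HG: "H \<noteq> G"
    proof
      assume "H = G"
      then have "D = {}" using symdiff_cancel[of G D] unfolding H_def symdiff_def by auto
      then show False using D(3) by simp
    qed
    have "dist (?q H) L < \<epsilon>/4" using F(3)[OF Hg HF] H' HG by auto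
    moreover have "?q H = s * (infsum \<phi> D / infsum w D)"
      unfolding H_def s_def w_def by (rule quot[OF G A D(1)]) (use D(2) in \<open>auto simp: F1_def\<close>)
    ultimately show ?thesis using sgn_swap[OF s] by (simp add: dist_real_def)
  qed
  have inv_facts: "inv m \<in> KV \<and> \<psi> (inv m) = m \<and> inv m \<notin> F1" if "m \<ge> N" for m
  proof -
    have m1: "m \<ge> 1" using that unfolding N_def by simp
    have "inv m \<in> KV" "\<psi> (inv m) = m" using inv_in[OF m1] psi_inv[OF m1] unfolding inv_def by auto
    moreover have "inv m \<notin> F1" using NF1[of "inv m"] that \<open>\<psi> (inv m) = m\<close> by auto
    ultimately show ?thesis by blast
  qed
  show "\<exists>no. \<forall>n\<ge>no. norm (2 ^ n * \<phi> (the_inv_into KV \<psi> n) - sg (symdiff G0 G) * sg G * L) < \<epsilon>"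
  proof (intro exI allI impI)
    fix n assume n: "n \<ge> N"
    define e where "e = inv n"
    have e: "e \<in> KV" "\<psi> e = n" "e \<notin> F1" using inv_facts[OF n] unfolding e_def by auto
    define M1 where "M1 = {m. n < m \<and> even m}"
    define M2 where "M2 = {m. n < m \<and> odd m}"
    define D1 where "D1 = inv ` M1"
    define Os where "Os = inv ` M2"
    have M1N: "\<And>m. m \<in> M1 \<Longrightarrow> m \<ge> N" "\<And>m. m \<in> M2 \<Longrightarrow> m \<ge> N" using n unfolding M1_def M2_def by auto
    have D1: "D1 \<subseteq> KV" "D1 \<inter> F1 = {}" using inv_facts M1N unfolding D1_def by auto
    have O1: "Os \<subseteq> KV" "Os \<inter> F1 = {}" using inv_facts M1N unfolding Os_def by auto
    have M1inf: "infinite M1" unfolding infinite_nat_iff_unbounded M1_def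
    proof (intro allI)
      fix m show "\<exists>k>m. k \<in> {m. n < m \<and> even m}" by (intro exI[of _ "2 * (m + n + 1)"]) auto
    qed
    have M2inf: "infinite M2" unfolding infinite_nat_iff_unbounded M2_def
    proof (intro allI)
      fix m show "\<exists>k>m. k \<in> {m. n < m \<and> odd m}" by (intro exI[of _ "2 * (m + n) + 1"]) auto
    qed
    have injM1: "inj_on inv M1" using inv_inj unfolding inv_def M1_def by (rule inj_on_subset) auto
    have injM2: "inj_on inv M2" using inv_inj unfolding inv_def M2_def by (rule inj_on_subset) auto
    have D1inf: "infinite D1" unfolding D1_def using M1inf finite_imageD[OF _ injM1] by blast
    have Oinf: "infinite Os" unfolding Os_def using M2inf finite_imageD[OF _ injM2] by blast
    have psiD1: "\<And>x. x \<in> D1 \<Longrightarrow> n < \<psi> x \<and> even (\<psi> x)" using inv_facts M1N unfolding D1_def M1_def by auto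
    have psiO: "\<And>x. x \<in> Os \<Longrightarrow> n < \<psi> x \<and> odd (\<psi> x)" using inv_facts M1N unfolding Os_def M2_def by auto
    have eD1: "e \<notin> D1" using psiD1 e(2) by auto
    have DO: "D1 \<inter> Os = {}" using psiD1 psiO by fastforce
    have DO2: "insert e D1 \<inter> Os = {}" using DO psiO e(2) by fastforce
    have k1: "\<bar>infsum \<phi> D1 / infsum w D1 - s * L\<bar> < \<epsilon>/4"
      by (rule key[OF D1 D1inf O1 DO Oinf])
    have k2: "\<bar>infsum \<phi> (insert e D1) / infsum w (insert e D1) - s * L\<bar> < \<epsilon>/4"
      by (rule key[OF _ _ _ O1 DO2 Oinf]) (use D1 e D1inf in auto)
    have P2: "infsum \<phi> (insert e D1) = \<phi> e + infsum \<phi> D1"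
      by (rule infsum_insert[OF sub_summable[OF phi_summable D1(1)] eD1])
    have W2: "infsum w (insert e D1) = w e + infsum w D1"
      unfolding w_def by (rule infsum_insert[OF sub_summable[OF w_summable D1(1)] eD1])
    have W1pos: "infsum w D1 > 0" unfolding w_def using w_pos_sum[OF D1(1)] D1inf by auto
    have bbM1: "bij_betw inv M1 D1" unfolding D1_def using injM1 by (simp add: bij_betw_imageI)
    have "infsum w D1 = infsum (\<lambda>m. w (inv m)) M1"
      using infsum_reindex_bij_betw[OF bbM1, of w] by simp
    also have "\<dots> = infsum (\<lambda>m. (1/2::real)^m) M1"
      by (rule infsum_cong) (use inv_facts M1N in \<open>auto simp: w_def\<close>)
    also have "\<dots> \<le> infsum (\<lambda>m. (1/2::real)^m) {n<..}"
    proof (rule infsum_mono_neutral)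
      show "(\<lambda>m. (1/2::real)^m) summable_on {n<..}" using geom_tail by blast
      then show "(\<lambda>m. (1/2::real)^m) summable_on M1"
        by (rule summable_on_subset) (auto simp: M1_def)
    qed (auto simp: M1_def)
    also have "\<dots> = w e" using geom_tail e(2) unfolding w_def by simp
    finally have W1le: "infsum w D1 \<le> w e" .
    have we: "w e > 0" unfolding w_def by simp
    have "\<bar>\<phi> e / w e - s * L\<bar> < 3 * (\<epsilon>/4)"
      by (rule real_key[OF k1 _ W1pos W1le we]) (use k2 P2 W2 in simp)
    moreover have "\<phi> e / w e = 2 ^ n * \<phi> (the_inv_into KV \<psi> n)"
      using e(2) unfolding w_def e_def inv_def by (simp add: power_one_over)
    ultimately show "norm (2 ^ n * \<phi> (the_inv_into KV \<psi> n) - sg (symdiff G0 G) * sg G * L) < \<epsilon>"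
      unfolding s_def using \<epsilon> by simp
  qed
qed

end

theorem proposition3p7:
  fixes \<psi> :: "'v set \<Rightarrow> nat" and \<phi> :: "'v set \<Rightarrow> real" and G0 :: "'v set set"
  assumes "countable (UNIV :: 'v set)" and "infinite (UNIV :: 'v set)"
    and "bij_betw \<psi> KV {1..}"
    and "G0 \<in> graphs0 \<union> graphs1"
    and "l1_pos \<phi>"
  defines "f \<equiv> (\<lambda>G. d_phi \<phi> G0 G)"
  shows "((\<exists>c. (\<lambda>n. 2 ^ n * \<phi> (the_inv_into KV \<psi> n)) \<longlonglongrightarrow> c) \<longleftrightarrow>
           (\<exists>G\<in>graphs - {{}, KV}. symdiff G G0 \<in> graphs0 \<union> graphs1 \<and>
              (\<exists>L. has_graph_deriv \<psi> f G L))) \<and>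
         (\<forall>c. ((\<lambda>n. 2 ^ n * \<phi> (the_inv_into KV \<psi> n)) \<longlonglongrightarrow> c) \<longrightarrow>
           (\<forall>G\<in>graphs - {{}, KV}. symdiff G G0 \<in> graphs0 \<union> graphs1 \<longrightarrow>
              (((G \<in> graphs0 \<and> symdiff G G0 \<in> graphs0) \<or> (G \<in> graphs1 \<and> symdiff G G0 \<in> graphs1))
                 \<longrightarrow> has_graph_deriv \<psi> f G c) \<and>
              (((G \<in> graphs0 \<and> symdiff G G0 \<in> graphs1) \<or> (G \<in> graphs1 \<and> symdiff G G0 \<in> graphs0))
                 \<longrightarrow> has_graph_deriv \<psi> f G (- c))))"
proof -
  note bij = assms(3) and l1 = assms(5)
  have KVinf: "infinite (KV :: 'v set set)" by (rule KV_infinite[OF bij l1])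
  have G0g: "G0 \<in> graphs" using g01_sub[OF assms(4)] unfolding graphs_def by auto
  have clos: "G \<in> graphs0 \<union> graphs1 \<and> symdiff G0 G \<in> graphs0 \<union> graphs1"
    if "symdiff G G0 \<in> graphs0 \<union> graphs1" for G
  proof -
    have "symdiff (symdiff G G0) G0 \<in> graphs0 \<union> graphs1" by (rule symdiff_closed[OF that assms(4)])
    moreover have "symdiff (symdiff G G0) G0 = G" unfolding symdiff_def by blast
    ultimately show ?thesis using that symdiff_commute[of G0 G] by auto
  qed
  have fw: "has_graph_deriv \<psi> f G (sg (symdiff G0 G) * sg G * c)"
    if "(\<lambda>n. 2 ^ n * \<phi> (the_inv_into KV \<psi> n)) \<longlonglongrightarrow> c" "symdiff G G0 \<in> graphs0 \<union> graphs1" for G c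
    using forward[OF bij l1 that(1)] clos[OF that(2)] unfolding f_def by blast
  have part2: "\<forall>c. ((\<lambda>n. 2 ^ n * \<phi> (the_inv_into KV \<psi> n)) \<longlonglongrightarrow> c) \<longrightarrow>
           (\<forall>G\<in>graphs - {{}, KV}. symdiff G G0 \<in> graphs0 \<union> graphs1 \<longrightarrow>
              (((G \<in> graphs0 \<and> symdiff G G0 \<in> graphs0) \<or> (G \<in> graphs1 \<and> symdiff G G0 \<in> graphs1))
                 \<longrightarrow> has_graph_deriv \<psi> f G c) \<and>
              (((G \<in> graphs0 \<and> symdiff G G0 \<in> graphs1) \<or> (G \<in> graphs1 \<and> symdiff G G0 \<in> graphs0))
                 \<longrightarrow> has_graph_deriv \<psi> f G (- c)))"
  proof (intro allI impI ballI conjI)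
    fix c G
    assume lim: "(\<lambda>n. 2 ^ n * \<phi> (the_inv_into KV \<psi> n)) \<longlonglongrightarrow> c"
      and G: "G \<in> graphs - {{}, KV}" and A: "symdiff G G0 \<in> graphs0 \<union> graphs1"
    have d: "has_graph_deriv \<psi> f G (sg (symdiff G G0) * sg G * c)"
      using fw[OF lim A] symdiff_commute[of G0 G] by simp
    show "has_graph_deriv \<psi> f G c"
      if "(G \<in> graphs0 \<and> symdiff G G0 \<in> graphs0) \<or> (G \<in> graphs1 \<and> symdiff G G0 \<in> graphs1)"
    proof -
      have "sg (symdiff G G0) * sg G = 1"
        using that sg0[OF bij l1, of G] sg0[OF bij l1, of "symdiff G G0"] sg1[OF bij l1, of G] sg1[OF bij l1, of "symdiff G G0"] by auto
      then show ?thesis using d by simp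
    qed
    show "has_graph_deriv \<psi> f G (- c)"
      if "(G \<in> graphs0 \<and> symdiff G G0 \<in> graphs1) \<or> (G \<in> graphs1 \<and> symdiff G G0 \<in> graphs0)"
    proof -
      have "sg (symdiff G G0) * sg G = -1"
        using that sg0[OF bij l1, of G] sg0[OF bij l1, of "symdiff G G0"] sg1[OF bij l1, of G] sg1[OF bij l1, of "symdiff G G0"] by auto
      then show ?thesis using d by simp
    qed
  qed
  have part1: "(\<exists>c. (\<lambda>n. 2 ^ n * \<phi> (the_inv_into KV \<psi> n)) \<longlonglongrightarrow> c) \<longleftrightarrow>
           (\<exists>G\<in>graphs - {{}, KV}. symdiff G G0 \<in> graphs0 \<union> graphs1 \<and>
              (\<exists>L. has_graph_deriv \<psi> f G L))"
  proof
    assume "\<exists>c. (\<lambda>n. 2 ^ n * \<phi> (the_inv_into KV \<psi> n)) \<longlonglongrightarrow> c"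
    then obtain c where lim: "(\<lambda>n. 2 ^ n * \<phi> (the_inv_into KV \<psi> n)) \<longlonglongrightarrow> c" by blast
    obtain G where G: "G \<in> graphs - {{}, KV}" "symdiff G G0 \<in> graphs0 \<union> graphs1"
    proof (cases "G0 \<in> {{}, KV}")
      case False
      have "symdiff G0 G0 \<in> graphs0" unfolding symdiff_def graphs0_def by auto
      then show ?thesis using that[of G0] False G0g by auto
    next
      case True
      have "(KV :: 'v set set) \<noteq> {}" using KVinf by auto
      then obtain e :: "'v set" where e: "e \<in> KV" by blast
      have ne: "{e} \<noteq> KV"
      proof
        assume "{e} = KV"
        moreover have "finite {e}" by simp
        ultimately show False using KVinf by metis
      qed
      have g: "{e} \<in> graphs - {{}, KV}" using e ne unfolding graphs_def by auto
      have "symdiff {e} G0 \<in> graphs0 \<union> graphs1"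
      proof (cases "G0 = {}")
        case True
        then show ?thesis using e unfolding symdiff_def graphs0_def by auto
      next
        case False
        then have "G0 = KV" using True by auto
        then have "symdiff {e} G0 = KV - {e}" using e unfolding symdiff_def by auto
        moreover have "KV - (KV - {e}) = {e}" using e by auto
        ultimately show ?thesis unfolding graphs1_def by auto
      qed
      then show ?thesis using that g by blast
    qed
    then show "\<exists>G\<in>graphs - {{}, KV}. symdiff G G0 \<in> graphs0 \<union> graphs1 \<and> (\<exists>L. has_graph_deriv \<psi> f G L)"
      using fw[OF lim G(2)] by blast
  next
    assume "\<exists>G\<in>graphs - {{}, KV}. symdiff G G0 \<in> graphs0 \<union> graphs1 \<and> (\<exists>L. has_graph_deriv \<psi> f G L)"
    then obtain G L where G: "symdiff G G0 \<in> graphs0 \<union> graphs1" and d: "has_graph_deriv \<psi> f G L"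
      by blast
    show "\<exists>c. (\<lambda>n. 2 ^ n * \<phi> (the_inv_into KV \<psi> n)) \<longlonglongrightarrow> c"
      using converse[OF bij l1 _ _ d[unfolded f_def]] clos[OF G] by blast
  qed
  show ?thesis using part1 part2 by blast
qed

end
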